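(* Let $V$ be an infinite-dimensional vector space over a field $\mathbb{F}$, let $\lambda\in\mathbb{F}$, and let $p_1,p_2,p_3\in\mathbb{F}[t]$ be split polynomials of degree $2$. Then $\lambda\,\mathrm{id}_V$ is a $(p_1,p_2,p_3)$-sum if and only if $\lambda$ is a $(p_1,p_2,p_3)$-sum or $2\lambda=\operatorname{tr}p_1+\operatorname{tr}p_2+\operatorname{tr}p_3$.
   Context: An endomorphism $u$ is a $(p_1,p_2,p_3)$-sum if $u=u_1+u_2+u_3$ for some endomorphisms $u_k$ of $V$ with $p_k(u_k)=0$ for all $k$. A scalar $\lambda$ is a $(p_1,p_2,p_3)$-sum if $\lambda=x_1+x_2+x_3$ with $x_k\in\mathbb{F}$ and $p_k(x_k)=0$ for all $k$. The trace $\operatorname{tr}p$ of a nonconstant polynomial $p$ with leading coefficient $\alpha$ is the opposite of the coefficient of $\alpha^{-1}p$ on $t^{\deg p-1}$. *)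

theory Defs
  imports Main "HOL-Computational_Algebra.Polynomial"
begin

definition poly_endo :: "('a::field \<Rightarrow> 'v::ab_group_add \<Rightarrow> 'v) \<Rightarrow> 'a poly \<Rightarrow> ('v \<Rightarrow> 'v) \<Rightarrow> ('v \<Rightarrow> 'v)" where
  "poly_endo scale p u = (\<lambda>v. \<Sum>i\<le>degree p. scale (coeff p i) ((u ^^ i) v))"

definition split_poly :: "'a::field poly \<Rightarrow> bool" where
  "split_poly p \<longleftrightarrow> (\<exists>c rs. p = smult c (\<Prod>r\<leftarrow>rs. [:- r, 1:]))"

definition poly_trace :: "'a::field poly \<Rightarrow> 'a" where
  "poly_trace p = - (coeff p (degree p - 1) / lead_coeff p)"

definition scalar_sum3 :: "'a::field poly \<Rightarrow> 'a poly \<Rightarrow> 'a poly \<Rightarrow> 'a \<Rightarrow> bool" where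
  "scalar_sum3 p1 p2 p3 lam \<longleftrightarrow>
     (\<exists>x1 x2 x3. poly p1 x1 = 0 \<and> poly p2 x2 = 0 \<and> poly p3 x3 = 0 \<and> lam = x1 + x2 + x3)"

definition endo_sum3 :: "('a::field \<Rightarrow> 'v::ab_group_add \<Rightarrow> 'v) \<Rightarrow> 'a poly \<Rightarrow> 'a poly \<Rightarrow> 'a poly \<Rightarrow> ('v \<Rightarrow> 'v) \<Rightarrow> bool" where
  "endo_sum3 scale p1 p2 p3 u \<longleftrightarrow>
     (\<exists>u1 u2 u3. Vector_Spaces.linear scale scale u1 \<and> Vector_Spaces.linear scale scale u2 \<and>
        Vector_Spaces.linear scale scale u3 \<and>
        poly_endo scale p1 u1 = (\<lambda>_. 0) \<and> poly_endo scale p2 u2 = (\<lambda>_. 0) \<and>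
        poly_endo scale p3 u3 = (\<lambda>_. 0) \<and>
        u = (\<lambda>v. u1 v + u2 v + u3 v))"

end

theory Submission
  imports Defs
begin

lemma deg2_poly_endo:
  assumes "degree p = 2"
  shows "poly_endo sc p u v = sc (coeff p 0) v + sc (coeff p 1) (u v) + sc (coeff p 2) (u (u v))"
  unfolding poly_endo_def assms by (simp add: numeral_2_eq_2 atMost_Suc add_ac)

lemma deg2_poly:
  fixes p :: "'a::field poly"
  assumes "degree p = 2"
  shows "poly p x = coeff p 0 + coeff p 1 * x + coeff p 2 * x^2"
  by (subst poly_altdef) (simp add: assms numeral_2_eq_2 atMost_Suc add_ac power2_eq_square)

lemma deg2_trace: "degree p = 2 \<Longrightarrow> poly_trace p = - (coeff p 1 / coeff p 2)"
  unfolding poly_trace_def by simp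

lemma deg2_lc: "degree p = 2 \<Longrightarrow> coeff p 2 \<noteq> 0"
proof -
  assume a: "degree p = 2"
  then have "p \<noteq> 0" by auto
  then show ?thesis using a leading_coeff_0_iff[of p] by simp
qed

lemma split_deg2:
  fixes p :: "'a::field poly"
  assumes "split_poly p" "degree p = 2"
  shows "\<exists>a b. poly_trace p = a + b \<and> coeff p 0 / coeff p 2 = a * b"
proof -
  obtain c rs where p: "p = smult c (\<Prod>r\<leftarrow>rs. [:- r, 1:])"
    using assms(1) unfolding split_poly_def by blast
  have c: "c \<noteq> 0" using assms(2) p by auto
  have deg: "degree (\<Prod>r\<leftarrow>rs. [:- r, (1::'a):]) = length rs" for rs :: "'a list"
  proof (induction rs)
    case Nil then show ?case by simp
  next
    case (Cons r rs)
    have "(\<Prod>r\<leftarrow>rs. [:- r, (1::'a):]) \<noteq> 0"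
      by (auto simp: prod_list_zero_iff)
    then have "degree ([:- r, (1::'a):] * (\<Prod>r\<leftarrow>rs. [:- r, (1::'a):])) = degree [:- r, (1::'a):] + degree (\<Prod>r\<leftarrow>rs. [:- r, (1::'a):])"
      by (intro degree_mult_eq) auto
    then show ?case using Cons by (simp del: mult_pCons_left)
  qed
  have "length rs = 2" using assms(2) p c deg[of rs] by simp
  then obtain r1 r2 where rs: "rs = [r1, r2]"
    by (metis (no_types, lifting) One_nat_def Suc_1 length_0_conv length_Suc_conv)
  have "p = [: c * (r1 * r2), - (c * (r1 + r2)), c :]"
    unfolding p rs by (simp add: algebra_simps)
  then have "coeff p 0 = c * (r1 * r2)" "coeff p 1 = - (c * (r1 + r2))" "coeff p 2 = c"
    by (simp_all add: numeral_2_eq_2)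
  then show ?thesis using c by (intro exI[of _ r1] exI[of _ r2]) (simp add: deg2_trace[OF assms(2)])
qed

context vector_space begin

lemma lin_add: "Vector_Spaces.linear scale scale u \<Longrightarrow> u (x + y) = u x + u y"
  using module_hom.add[OF module_hom_iff_linear[THEN iffD2]] by blast
lemma lin_scale: "Vector_Spaces.linear scale scale u \<Longrightarrow> u (c *s x) = c *s u x"
  using module_hom.scale[OF module_hom_iff_linear[THEN iffD2]] by blast
lemma lin_diff: "Vector_Spaces.linear scale scale u \<Longrightarrow> u (x - y) = u x - u y"
  using module_hom.diff[OF module_hom_iff_linear[THEN iffD2]] by blast

lemma poly_endo_zero_iff:
  assumes "degree p = 2"
  shows "poly_endo scale p u = (\<lambda>_. 0) \<longleftrightarrow>
     (\<forall>v. u (u v) = poly_trace p *s u v - (coeff p 0 / coeff p 2) *s v)"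
proof -
  have c2: "coeff p 2 \<noteq> 0" using deg2_lc[OF assms] .
  have key: "coeff p 2 *s (u (u v) - (poly_trace p *s u v - (coeff p 0 / coeff p 2) *s v))
     = poly_endo scale p u v" for v
    using c2 by (simp add: deg2_poly_endo[OF assms] deg2_trace[OF assms] scale_right_diff_distrib
         algebra_simps)
  show ?thesis
  proof
    assume "poly_endo scale p u = (\<lambda>_. 0)"
    then show "\<forall>v. u (u v) = poly_trace p *s u v - (coeff p 0 / coeff p 2) *s v"
      using key c2 by (metis scale_eq_0_iff right_minus_eq)
  next
    assume "\<forall>v. u (u v) = poly_trace p *s u v - (coeff p 0 / coeff p 2) *s v"
    then show "poly_endo scale p u = (\<lambda>_. 0)" using key by (auto simp: fun_eq_iff)
  qed
qed

lemma eig_root: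
  assumes "degree p = 2" "y \<noteq> 0" "u y = x *s y"
    "u (u y) = poly_trace p *s u y - (coeff p 0 / coeff p 2) *s y"
    "Vector_Spaces.linear scale scale u"
  shows "poly p x = 0"
proof -
  have c2: "coeff p 2 \<noteq> 0" using deg2_lc[OF assms(1)] .
  have "u (u y) = (x * x) *s y" using assms(3,5) by (simp add: lin_scale)
  with assms(3,4) have e: "(x * x) *s y = (poly_trace p * x) *s y - (coeff p 0 / coeff p 2) *s y"
    by (simp add: lin_scale assms(5))
  have "(x * x - poly_trace p * x + coeff p 0 / coeff p 2) *s y = 0"
    by (simp add: scale_left_diff_distrib scale_left_distrib e)
  with assms(2) have "x * x - poly_trace p * x + coeff p 0 / coeff p 2 = 0" by simp
  then have "coeff p 2 * (x * x - poly_trace p * x + coeff p 0 / coeff p 2) = 0" by simp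
  then show ?thesis using c2
    by (simp add: deg2_poly[OF assms(1)] deg2_trace[OF assms(1)] algebra_simps power2_eq_square)
qed

lemma eigvec:
  assumes "Vector_Spaces.linear scale scale u" "\<forall>v. u (u v) = (a + b) *s u v - (a * b) *s v" "v \<noteq> 0"
  shows "\<exists>y x. y \<noteq> 0 \<and> u y = x *s y \<and> (y = v \<or> y = u v - b *s v)"
proof (cases "u v - b *s v = 0")
  case True
  then show ?thesis using assms(3) by (intro exI[of _ v] exI[of _ b]) simp
next
  case False
  have "u (u v - b *s v) = a *s (u v - b *s v)"
    using assms(1,2) by (simp add: lin_diff lin_scale scale_left_distrib scale_right_diff_distrib)
  then show ?thesis using False by blast
qed


lemma commute3:
  assumes l1: "Vector_Spaces.linear scale scale u1" and l2: "Vector_Spaces.linear scale scale u2"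
    and q1: "\<And>v. u1 (u1 v) = T1 *s u1 v - N1 *s v"
    and q2: "\<And>v. u2 (u2 v) = T2 *s u2 v - N2 *s v"
    and q3: "\<And>v. u3 (u3 v) = T3 *s u3 v - N3 *s v"
    and sm: "\<And>v. u1 v + u2 v + u3 v = lam *s v"
    and ne: "2 * lam \<noteq> T1 + T2 + T3"
  shows "u1 (u2 x) = u2 (u1 x)"
proof -
  have h3: "u3 z = lam *s z - u1 z - u2 z" for z
    using sm[of z] by (simp add: algebra_simps)
  define R where "R y = T3 *s (lam *s y - u1 y - u2 y) - N3 *s y - lam *s (lam *s y - u1 y - u2 y)
     + lam *s u1 y - (T1 *s u1 y - N1 *s y) + lam *s u2 y - (T2 *s u2 y - N2 *s y)" for y
  have E: "u1 (u2 y) + u2 (u1 y) = R y" for y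
  proof -
    let ?w = "lam *s y - u1 y - u2 y"
    have A: "u3 (u3 y) = lam *s ?w - u1 ?w - u2 ?w" using h3[of "u3 y"] h3[of y] by simp
    have B: "u1 ?w = lam *s u1 y - (T1 *s u1 y - N1 *s y) - u1 (u2 y)"
      by (simp add: lin_diff[OF l1] lin_scale[OF l1] q1)
    have C: "u2 ?w = lam *s u2 y - u2 (u1 y) - (T2 *s u2 y - N2 *s y)"
      by (simp add: lin_diff[OF l2] lin_scale[OF l2] q2)
    have D: "u3 (u3 y) = T3 *s ?w - N3 *s y" using q3[of y] h3[of y] by simp
    have X: "lam *s ?w - (lam *s u1 y - (T1 *s u1 y - N1 *s y) - u1 (u2 y))
       - (lam *s u2 y - u2 (u1 y) - (T2 *s u2 y - N2 *s y)) = T3 *s ?w - N3 *s y"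
      using A B C D by simp
    have "(u1 (u2 y) + u2 (u1 y)) - R y = (lam *s ?w - (lam *s u1 y - (T1 *s u1 y - N1 *s y) - u1 (u2 y))
       - (lam *s u2 y - u2 (u1 y) - (T2 *s u2 y - N2 *s y))) - (T3 *s ?w - N3 *s y)"
      unfolding R_def by (simp add: algebra_simps)
    then show ?thesis using X by simp
  qed
  define d where "d = u2 (u1 x) - u1 (u2 x)"
  have e1: "u1 (u2 (u1 x)) + u2 (u1 (u1 x)) = R (u1 x)" by (rule E)
  have e2: "u1 (u1 (u2 x)) + u1 (u2 (u1 x)) = u1 (R x)"
    using arg_cong[OF E[of x], of u1] by (simp add: lin_add[OF l1])
  have r: "R (u1 x) - u1 (R x) = lam *s d + lam *s d - T2 *s d - T3 *s d"
    unfolding R_def d_def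
    by (simp add: lin_diff[OF l1] lin_scale[OF l1] lin_add[OF l1] q1 scale_right_diff_distrib
        scale_right_distrib algebra_simps)
  have l: "u2 (u1 (u1 x)) - u1 (u1 (u2 x)) = T1 *s d"
    unfolding d_def by (simp add: q1 lin_diff[OF l2] lin_scale[OF l2] scale_right_diff_distrib)
  have "u2 (u1 (u1 x)) - u1 (u1 (u2 x)) = R (u1 x) - u1 (R x)"
    using e1 e2 by (metis add_diff_cancel_left add_diff_cancel_right add.commute diff_diff_eq2)
  then have "T1 *s d = lam *s d + lam *s d - T2 *s d - T3 *s d" using l r by simp
  then have H: "T1 *s d = lam *s d + lam *s d - T2 *s d - T3 *s d" .
  have "(T1 + T2 + T3 - (lam + lam)) *s d = T1 *s d + T2 *s d + T3 *s d - (lam *s d + lam *s d)"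
    by (simp only: scale_left_distrib scale_left_diff_distrib)
  also have "\<dots> = (lam *s d + lam *s d - T2 *s d - T3 *s d) + T2 *s d + T3 *s d - (lam *s d + lam *s d)"
    by (simp only: H)
  also have "\<dots> = 0" by simp
  finally have "(T1 + T2 + T3 - (lam + lam)) *s d = 0" .
  moreover have "T1 + T2 + T3 - (lam + lam) \<noteq> 0" by (metis ne mult_2 right_minus_eq)
  ultimately have "d = 0" by simp
  then show ?thesis unfolding d_def by simp
qed


lemma linI:
  assumes "\<And>x y. f (x + y) = f x + f y" "\<And>c x. f (c *s x) = c *s f x"
  shows "Vector_Spaces.linear scale scale f"
  using assms vector_space_axioms unfolding Vector_Spaces.linear_iff by blast

lemma matrix_ops:
  assumes ind: "independent B" and sp: "span B = UNIV" and inf: "infinite B"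
  obtains op where "\<And>a b c d. Vector_Spaces.linear scale scale (op a b c d)"
   "\<And>a b c d v. op a b c d (op a b c d v) = (a + d) *s op a b c d v - (a*d - b*c) *s v"
   "\<And>a b c d a' b' c' d' v. op a b c d v + op a' b' c' d' v = op (a+a') (b+b') (c+c') (d+d') v"
   "\<And>a v. op a 0 0 a v = a *s v"
proof -
  interpret p: vector_space_pair scale scale by unfold_locales
  have "ordIso2 (card_of (B <+> B)) (card_of B)"
    by (rule card_of_Plus_infinite1[OF inf card_of_mono1]) simp
  then obtain h where h: "bij_betw h (B <+> B) B" using card_of_ordIso by blast
  define g where "g = inv_into (B <+> B) h"
  have hl: "h (Inl x) \<in> B" "h (Inr x) \<in> B" if "x \<in> B" for x
    using bij_betw_apply[OF h] that by auto
  have gl: "g (h (Inl x)) = Inl x" "g (h (Inr x)) = Inr x" if "x \<in> B" for x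
    unfolding g_def using bij_betw_inv_into_left[OF h, of "Inl x"] bij_betw_inv_into_left[OF h, of "Inr x"] that
    by auto
  have cases: "\<exists>x\<in>B. b = h (Inl x) \<or> b = h (Inr x)" if "b \<in> B" for b
  proof -
    have "b \<in> h ` (B <+> B)" using bij_betw_imp_surj_on[OF h] that by simp
    then obtain s where s: "s \<in> B <+> B" "b = h s" by blast
    then show ?thesis by (cases s) auto
  qed
  define f where "f a b c d v = (case g v of Inl x \<Rightarrow> a *s v + c *s h (Inr x)
      | Inr x \<Rightarrow> b *s h (Inl x) + d *s v)" for a b c d v
  define op where "op a b c d = p.construct B (f a b c d)" for a b c d
  have lin: "Vector_Spaces.linear scale scale (op a b c d)" for a b c d
    unfolding op_def by (rule p.linear_construct[OF ind])
  have opb: "op a b c d v = f a b c d v" if "v \<in> B" for a b c d v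
    unfolding op_def using p.construct_basis[OF ind that] .
  have ext: "F v = G v" if "Vector_Spaces.linear scale scale F" "Vector_Spaces.linear scale scale G"
     "\<And>b. b \<in> B \<Longrightarrow> F b = G b" for F G v
    using p.linear_eq_on[OF that(1,2) _ that(3)] sp by blast
  show ?thesis
  proof
    show "Vector_Spaces.linear scale scale (op a b c d)" for a b c d by (rule lin)
  next
    fix a b c d v
    show "op a b c d (op a b c d v) = (a + d) *s op a b c d v - (a*d - b*c) *s v"
    proof (rule ext[of "\<lambda>v. op a b c d (op a b c d v)" "\<lambda>v. (a + d) *s op a b c d v - (a*d - b*c) *s v"])
      show "Vector_Spaces.linear scale scale (\<lambda>v. op a b c d (op a b c d v))"
        by (rule linI) (simp_all add: lin_add[OF lin] lin_scale[OF lin])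
      show "Vector_Spaces.linear scale scale (\<lambda>v. (a + d) *s op a b c d v - (a*d - b*c) *s v)"
        by (rule linI) (simp_all add: lin_add[OF lin] lin_scale[OF lin] algebra_simps)
      fix e assume "e \<in> B"
      then obtain x where x: "x \<in> B" and dj: "e = h (Inl x) \<or> e = h (Inr x)" using cases by blast
      from dj show "op a b c d (op a b c d e) = (a + d) *s op a b c d e - (a*d - b*c) *s e"
      proof
        assume e: "e = h (Inl x)"
        show ?thesis using x
          by (simp add: e opb hl gl f_def lin_add[OF lin] lin_scale[OF lin] scale_right_distrib
            scale_left_distrib scale_right_diff_distrib scale_left_diff_distrib algebra_simps)
      next
        assume e: "e = h (Inr x)"
        show ?thesis using x
          by (simp add: e opb hl gl f_def lin_add[OF lin] lin_scale[OF lin] scale_right_distrib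
            scale_left_distrib scale_right_diff_distrib scale_left_diff_distrib algebra_simps)
      qed
    qed
  next
    fix a b c d a' b' c' d' v
    show "op a b c d v + op a' b' c' d' v = op (a+a') (b+b') (c+c') (d+d') v"
    proof (rule ext[of "\<lambda>v. op a b c d v + op a' b' c' d' v" "op (a+a') (b+b') (c+c') (d+d')"])
      show "Vector_Spaces.linear scale scale (\<lambda>v. op a b c d v + op a' b' c' d' v)"
        by (rule linI) (simp_all add: lin_add[OF lin] lin_scale[OF lin] algebra_simps)
      show "Vector_Spaces.linear scale scale (op (a+a') (b+b') (c+c') (d+d'))" by (rule lin)
      fix e assume "e \<in> B"
      then obtain x where x: "x \<in> B" and "e = h (Inl x) \<or> e = h (Inr x)" using cases by blast
      then show "op a b c d e + op a' b' c' d' e = op (a+a') (b+b') (c+c') (d+d') e"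
        using x by (auto simp: opb hl gl f_def scale_left_distrib algebra_simps)
    qed
  next
    fix a v
    show "op a 0 0 a v = a *s v"
    proof (rule ext[of "op a 0 0 a" "\<lambda>v. a *s v"])
      show "Vector_Spaces.linear scale scale (op a 0 0 a)" by (rule lin)
      show "Vector_Spaces.linear scale scale (\<lambda>v. a *s v)"
        by (rule linI) (simp_all add: algebra_simps)
      fix e assume "e \<in> B"
      then obtain x where x: "x \<in> B" and "e = h (Inl x) \<or> e = h (Inr x)" using cases by blast
      then show "op a 0 0 a e = a *s e"
        using x by (auto simp: opb hl gl f_def)
    qed
  qed
qed



lemma prop_in:
  fixes lam :: 'a and p1 p2 p3 :: "'a poly"
  assumes nfin: "\<not> (\<exists>B. finite B \<and> span B = UNIV)"
    and sp1: "split_poly p1" and d1: "degree p1 = 2"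
    and sp2: "split_poly p2" and d2: "degree p2 = 2"
    and d3: "degree p3 = 2"
  shows "endo_sum3 scale p1 p2 p3 (\<lambda>v. scale lam v) \<longleftrightarrow>
         (scalar_sum3 p1 p2 p3 lam \<or> 2 * lam = poly_trace p1 + poly_trace p2 + poly_trace p3)"
proof -
  obtain a1 b1 where s1: "poly_trace p1 = a1 + b1" "coeff p1 0 / coeff p1 2 = a1 * b1"
    using split_deg2[OF sp1 d1] by blast
  obtain a2 b2 where s2: "poly_trace p2 = a2 + b2" "coeff p2 0 / coeff p2 2 = a2 * b2"
    using split_deg2[OF sp2 d2] by blast
  show ?thesis
  proof
    assume "endo_sum3 scale p1 p2 p3 (\<lambda>v. scale lam v)"
    then obtain u1 u2 u3 where l1: "Vector_Spaces.linear scale scale u1"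
      and l2: "Vector_Spaces.linear scale scale u2" and l3: "Vector_Spaces.linear scale scale u3"
      and z1: "poly_endo scale p1 u1 = (\<lambda>_. 0)" and z2: "poly_endo scale p2 u2 = (\<lambda>_. 0)"
      and z3: "poly_endo scale p3 u3 = (\<lambda>_. 0)"
      and sm0: "(\<lambda>v. scale lam v) = (\<lambda>v. u1 v + u2 v + u3 v)"
      unfolding endo_sum3_def by blast
    have q1: "\<And>v. u1 (u1 v) = poly_trace p1 *s u1 v - (coeff p1 0 / coeff p1 2) *s v"
      using z1 poly_endo_zero_iff[OF d1] by blast
    have q2: "\<And>v. u2 (u2 v) = poly_trace p2 *s u2 v - (coeff p2 0 / coeff p2 2) *s v"
      using z2 poly_endo_zero_iff[OF d2] by blast
    have q3: "\<And>v. u3 (u3 v) = poly_trace p3 *s u3 v - (coeff p3 0 / coeff p3 2) *s v"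
      using z3 poly_endo_zero_iff[OF d3] by blast
    have sm: "\<And>v. u1 v + u2 v + u3 v = lam *s v" using sm0 by metis
    show "scalar_sum3 p1 p2 p3 lam \<or> 2 * lam = poly_trace p1 + poly_trace p2 + poly_trace p3"
    proof (cases "2 * lam = poly_trace p1 + poly_trace p2 + poly_trace p3")
      case True then show ?thesis by simp
    next
      case False
      have com: "u1 (u2 x) = u2 (u1 x)" for x
        by (rule commute3[OF l1 l2 q1 q2 q3 sm False])
      obtain x0 :: 'b where x0: "x0 \<noteq> 0"
      proof -
        have "\<exists>x::'b. x \<noteq> 0"
        proof (rule ccontr)
          assume "\<not> (\<exists>x::'b. x \<noteq> 0)"
          then have "UNIV = {0::'b}" by auto
          then have "span {} = UNIV" by simp
          then show False using nfin by blast
        qed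
        then show ?thesis using that by blast
      qed
      have q1': "\<forall>v. u1 (u1 v) = (a1 + b1) *s u1 v - (a1 * b1) *s v" using q1 s1 by simp
      have q2': "\<forall>v. u2 (u2 v) = (a2 + b2) *s u2 v - (a2 * b2) *s v" using q2 s2 by simp
      obtain y1 e1 where y1: "y1 \<noteq> 0" "u1 y1 = e1 *s y1"
        using eigvec[OF l1 q1' x0] by blast
      obtain y2 e2 where y2: "y2 \<noteq> 0" "u2 y2 = e2 *s y2" and yy: "y2 = y1 \<or> y2 = u2 y1 - b2 *s y1"
        using eigvec[OF l2 q2' y1(1)] by blast
      have u1y2: "u1 y2 = e1 *s y2"
        using yy
      proof
        assume "y2 = y1" then show ?thesis using y1 by simp
      next
        assume e: "y2 = u2 y1 - b2 *s y1"
        show ?thesis unfolding e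
          by (simp add: lin_diff[OF l1] lin_scale[OF l1] lin_scale[OF l2] com y1
              scale_right_diff_distrib algebra_simps)
      qed
      have u3y2: "u3 y2 = (lam - e1 - e2) *s y2"
        using sm[of y2] u1y2 y2(2) by (simp add: scale_left_diff_distrib algebra_simps)
      have r1: "poly p1 e1 = 0" by (rule eig_root[OF d1 y2(1) u1y2 q1 l1])
      have r2: "poly p2 e2 = 0" by (rule eig_root[OF d2 y2(1) y2(2) q2 l2])
      have r3: "poly p3 (lam - e1 - e2) = 0" by (rule eig_root[OF d3 y2(1) u3y2 q3 l3])
      have "scalar_sum3 p1 p2 p3 lam"
      proof -
        have "lam = e1 + e2 + (lam - e1 - e2)" by simp
        then show ?thesis unfolding scalar_sum3_def using r1 r2 r3 by blast
      qed
      then show ?thesis by simp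
    qed
  next
    assume "scalar_sum3 p1 p2 p3 lam \<or> 2 * lam = poly_trace p1 + poly_trace p2 + poly_trace p3"
    then show "endo_sum3 scale p1 p2 p3 (\<lambda>v. scale lam v)"
    proof
      assume "scalar_sum3 p1 p2 p3 lam"
      then obtain x1 x2 x3 where r: "poly p1 x1 = 0" "poly p2 x2 = 0" "poly p3 x3 = 0"
        and l: "lam = x1 + x2 + x3" unfolding scalar_sum3_def by blast
      have scl: "Vector_Spaces.linear scale scale (\<lambda>v. x *s v)" for x
        by (rule linI) (simp_all add: algebra_simps)
      have pe: "poly_endo scale p (\<lambda>v. x *s v) = (\<lambda>_. 0)" if "degree p = 2" "poly p x = 0" for p x
      proof
        fix v
        have "poly_endo scale p (\<lambda>v. x *s v) v = poly p x *s v"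
          by (simp add: deg2_poly_endo[OF that(1)] deg2_poly[OF that(1)] scale_left_distrib
              power2_eq_square mult.assoc)
        then show "poly_endo scale p (\<lambda>v. x *s v) v = 0" using that(2) by simp
      qed
      show ?thesis unfolding endo_sum3_def
        by (rule exI[of _ "\<lambda>v. x1 *s v"], rule exI[of _ "\<lambda>v. x2 *s v"], rule exI[of _ "\<lambda>v. x3 *s v"])
          (simp add: scl pe d1 d2 d3 r l scale_left_distrib fun_eq_iff)
    next
      assume tr: "2 * lam = poly_trace p1 + poly_trace p2 + poly_trace p3"
      obtain B where ind: "independent B" and spB: "UNIV \<subseteq> span B"
        using basis_exists[of UNIV] by blast
      have sp: "span B = UNIV" using spB by blast
      have inf: "infinite B" using nfin sp by blast
      obtain op where lin: "\<And>a b c d. Vector_Spaces.linear scale scale (op a b c d)"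
        and quad: "\<And>a b c d v. op a b c d (op a b c d v) = (a + d) *s op a b c d v - (a*d - b*c) *s v"
        and add: "\<And>a b c d a' b' c' d' v. op a b c d v + op a' b' c' d' v = op (a+a') (b+b') (c+c') (d+d') v"
        and idn: "\<And>a v. op a 0 0 a v = a *s v"
        using matrix_ops[OF ind sp inf] by blast
      define y where "y = (lam - a1 - a2) * (lam - b1 - b2) - coeff p3 0 / coeff p3 2"
      define u1 where "u1 = op a1 1 0 b1"
      define u2 where "u2 = op a2 0 y b2"
      define u3 where "u3 = op (lam - a1 - a2) (-1) (-y) (lam - b1 - b2)"
      have z1: "poly_endo scale p1 u1 = (\<lambda>_. 0)"
        unfolding poly_endo_zero_iff[OF d1] u1_def using quad s1 by simp
      have z2: "poly_endo scale p2 u2 = (\<lambda>_. 0)"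
        unfolding poly_endo_zero_iff[OF d2] u2_def using quad s2 by simp
      have t3: "lam - a1 - a2 + (lam - b1 - b2) = poly_trace p3"
        using tr s1 s2 by (simp add: algebra_simps mult_2)
      have n3: "(lam - a1 - a2) * (lam - b1 - b2) - (-1) * (-y) = coeff p3 0 / coeff p3 2"
        unfolding y_def by simp
      have z3: "poly_endo scale p3 u3 = (\<lambda>_. 0)"
        unfolding poly_endo_zero_iff[OF d3] u3_def using quad[of "lam - a1 - a2" "-1" "-y" "lam - b1 - b2"]
        unfolding t3 n3 by simp
      have sum: "u1 v + u2 v + u3 v = lam *s v" for v
      proof -
        have "u1 v + u2 v + u3 v = op (a1 + a2 + (lam - a1 - a2)) (1 + 0 + - 1) (0 + y + - y) (b1 + b2 + (lam - b1 - b2)) v"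
          unfolding u1_def u2_def u3_def add by simp
        also have "\<dots> = op lam 0 0 lam v" by (simp add: algebra_simps)
        finally show ?thesis by (simp add: idn)
      qed
      show ?thesis unfolding endo_sum3_def
        by (rule exI[of _ u1], rule exI[of _ u2], rule exI[of _ u3])
          (simp add: u1_def u2_def u3_def lin z1[unfolded u1_def] z2[unfolded u2_def]
            z3[unfolded u3_def] sum[unfolded u1_def u2_def u3_def])
    qed
  qed
qed


end

theorem proposition1:
  fixes scale :: "'a::field \<Rightarrow> 'v::ab_group_add \<Rightarrow> 'v"
    and lam :: 'a and p1 p2 p3 :: "'a poly"
  assumes "vector_space scale"
    and "\<not> (\<exists>B. finite B \<and> module.span scale B = UNIV)"
    and "split_poly p1" and "degree p1 = 2"
    and "split_poly p2" and "degree p2 = 2"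
    and "split_poly p3" and "degree p3 = 2"
  shows "endo_sum3 scale p1 p2 p3 (\<lambda>v. scale lam v) \<longleftrightarrow>
         (scalar_sum3 p1 p2 p3 lam \<or> 2 * lam = poly_trace p1 + poly_trace p2 + poly_trace p3)"
  by (rule vector_space.prop_in[OF assms(1) assms(2) assms(3) assms(4) assms(5) assms(6) assms(8)])

end
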